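(* Let $\lambda$ be a Salem number and $n$ a positive integer. Then the positive real number $\sqrt[n]{\lambda}$ has an algebraic conjugate (over $\mathbb{Q}$) of modulus $1$.
   Context: A Salem number is a real algebraic integer $\lambda>1$ all of whose other conjugates over $\mathbb{Q}$ have modulus at most $1$, with at least one conjugate of modulus exactly $1$. *)

theory Defs
  imports "HOL-Computational_Algebra.Computational_Algebra"
begin

definition rat_min_poly :: "rat poly \<Rightarrow> complex \<Rightarrow> bool" where
  "rat_min_poly p x \<longleftrightarrow> lead_coeff p = 1 \<and> irreducible p \<and> poly (map_poly of_rat p) x = 0"

definition rat_conjugate :: "complex \<Rightarrow> complex \<Rightarrow> bool" where
  "rat_conjugate x z \<longleftrightarrow> (\<exists>p. rat_min_poly p x \<and> poly (map_poly of_rat p) z = 0)"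

definition salem_number :: "real \<Rightarrow> bool" where
  "salem_number l \<longleftrightarrow> algebraic_int l \<and> l > 1 \<and>
     (\<forall>z. rat_conjugate (complex_of_real l) z \<and> z \<noteq> complex_of_real l \<longrightarrow> cmod z \<le> 1) \<and>
     (\<exists>z. rat_conjugate (complex_of_real l) z \<and> cmod z = 1)"

end

theory Submission imports Defs "HOL-Computational_Algebra.Field_as_Ring" begin

abbreviation cp :: "rat poly \<Rightarrow> complex poly" where "cp r \<equiv> map_poly of_rat r"

lemma cp_add: "cp (p + q) = cp p + cp q"
  by (rule poly_eqI) (simp add: coeff_map_poly of_rat_add)

lemma cp_minus: "cp (- p) = - cp p"
  by (rule poly_eqI) (simp add: coeff_map_poly of_rat_minus)

lemma cp_diff: "cp (p - q) = cp p - cp q"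
  by (rule poly_eqI) (simp add: coeff_map_poly of_rat_diff)

lemma cp_smult: "cp (smult c p) = smult (of_rat c) (cp p)"
  by (rule map_poly_smult) (auto simp: of_rat_mult)

lemma cp_pCons: "cp (pCons c p) = pCons (of_rat c) (cp p)"
  by (rule map_poly_pCons) auto

lemma cp_mult: "cp (p * q) = cp p * cp q"
  by (induction p) (auto simp: cp_add cp_smult cp_pCons)

lemma cp_1: "cp 1 = 1" by simp

lemma cp_monom: "cp (monom c n) = monom (of_rat c) n"
  by (rule map_poly_monom) simp

lemma cp_power: "cp (p ^ n) = cp p ^ n"
  by (induction n) (auto simp: cp_mult)

lemma degree_cp [simp]: "degree (cp p) = degree p"
  by (rule degree_map_poly) auto

lemma cp_pderiv: "cp (pderiv p) = pderiv (cp p)"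
  by (rule poly_eqI) (simp add: coeff_map_poly coeff_pderiv of_rat_mult of_rat_add)

lemma cp_pcompose: "cp (pcompose p r) = pcompose (cp p) (cp r)"
  by (induction p) (auto simp: cp_add cp_mult cp_pCons pcompose_pCons)

lemma cp_reflect: "cp (reflect_poly p) = reflect_poly (cp p)"
  by (rule poly_eqI) (simp add: coeff_map_poly coeff_reflect_poly)

lemma cp_dvd: "q dvd r \<Longrightarrow> cp q dvd cp r"
  by (auto simp: cp_mult)

lemma cp_dvd_root: "q dvd r \<Longrightarrow> poly (cp q) z = 0 \<Longrightarrow> poly (cp r) z = 0"
  by (auto simp: cp_mult)

lemma irr_no_common_root:
  assumes "irreducible (q :: rat poly)" "\<not> q dvd r" "poly (cp q) z = 0"
  shows "poly (cp r) z \<noteq> 0"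
proof
  assume r: "poly (cp r) z = 0"
  have "coprime q r"
    by (rule prime_elem_imp_coprime[OF field_poly_irreducible_imp_prime[OF assms(1)] assms(2)])
  hence "gcd q r = 1" by (rule coprime_imp_gcd_eq_1)
  hence "fst (bezout_coefficients q r) * q + snd (bezout_coefficients q r) * r = 1"
    using bezout_coefficients_fst_snd by metis
  hence "cp (fst (bezout_coefficients q r) * q + snd (bezout_coefficients q r) * r) = 1"
    by simp
  hence "poly (cp (fst (bezout_coefficients q r)) * cp q + cp (snd (bezout_coefficients q r)) * cp r) z = 1"
    by (simp add: cp_add cp_mult)
  thus False using r assms(3) by simp
qed

lemma irr_dvd:
  assumes "irreducible (q :: rat poly)" "poly (cp q) z = 0" "poly (cp r) z = 0"
  shows "q dvd r"
  using irr_no_common_root[OF assms(1) _ assms(2)] assms(3) by blast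

lemma irr_rsquarefree:
  assumes "irreducible (q :: rat poly)"
  shows "rsquarefree (cp q)"
proof -
  have q0: "q \<noteq> 0" using assms by auto
  have "\<not> is_unit q" using assms by (simp add: irreducible_def)
  hence dq: "degree q > 0" using q0 is_unit_iff_degree by auto
  hence pd: "pderiv q \<noteq> 0" by (simp add: pderiv_eq_0_iff)
  have "\<not> q dvd pderiv q"
  proof
    assume "q dvd pderiv q"
    hence "degree q \<le> degree (pderiv q)" using pd dvd_imp_degree_le by metis
    thus False using dq degree_pderiv[of q] by simp
  qed
  hence "\<And>a. \<not> (poly (cp q) a = 0 \<and> poly (pderiv (cp q)) a = 0)"
    using irr_no_common_root[OF assms] by (metis cp_pderiv)
  thus ?thesis by (simp add: rsquarefree_roots)
qed

lemma card_roots_irr: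
  assumes "irreducible (q :: rat poly)"
  shows "card {z. poly (cp q) z = 0} = degree q"
proof -
  have sq: "rsquarefree (cp q)" by (rule irr_rsquarefree[OF assms])
  hence q0: "cp q \<noteq> 0" by (simp add: rsquarefree_def)
  have c: "count (proots (cp q)) x \<le> 1" for x
  proof -
    have "order x (cp q) = 0 \<or> order x (cp q) = 1" using sq by (simp add: rsquarefree_def)
    thus ?thesis using q0 by (auto simp: count_proots)
  qed
  have "proots (cp q) = mset_set (set_mset (proots (cp q)))"
  proof (rule multiset_eqI)
    fix x
    show "count (proots (cp q)) x = count (mset_set (set_mset (proots (cp q)))) x"
    proof (cases "x \<in># proots (cp q)")
      case True
      then have "count (proots (cp q)) x > 0" by simp
      with c[of x] have "count (proots (cp q)) x = 1" by linarith
      then show ?thesis using True by (simp add: count_mset_set)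
    next
      case False
      then show ?thesis by (simp add: count_mset_set not_in_iff)
    qed
  qed
  hence "size (proots (cp q)) = card (set_mset (proots (cp q)))"
    by (metis size_mset_set)
  thus ?thesis using q0 by (simp add: size_proots_complex set_count_proots)
qed


lemma of_rat_complex_real: "(of_rat r :: complex) \<in> \<real>"
proof -
  obtain a b where "quotient_of r = (a, b)" by (cases "quotient_of r") auto
  hence "r = of_int a / of_int b" by (rule quotient_of_div)
  thus ?thesis by (simp add: of_rat_divide)
qed

lemma pow_cmod_1: "n > 0 \<Longrightarrow> cmod w ^ n = 1 \<Longrightarrow> cmod w = 1"
  by (metis norm_ge_zero power_eq_1_iff zero_less_iff_neq_zero power_eq_imp_eq_base power_one)


theorem mainTheorem3:
  fixes l :: real and n :: nat
  assumes "salem_number l" and "n > 0"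
  shows "\<exists>z. rat_conjugate (complex_of_real (root n l)) z \<and> cmod z = 1"
proof -
  define L where "L = complex_of_real l"
  from assms(1) have l1: "l > 1"
    and A: "\<And>z. rat_conjugate L z \<Longrightarrow> z \<noteq> L \<Longrightarrow> cmod z \<le> 1"
    and B: "\<exists>z. rat_conjugate L z \<and> cmod z = 1"
    unfolding salem_number_def L_def by auto
  from B obtain z0 p where pmin: "rat_min_poly p L" and pz0: "poly (cp p) z0 = 0"
    and z0: "cmod z0 = 1"
    unfolding rat_conjugate_def by auto
  have pirr: "irreducible p" and pL: "poly (cp p) L = 0"
    using pmin unfolding rat_min_poly_def by auto
  have conjroots: "cmod z \<le> 1" if "poly (cp p) z = 0" "z \<noteq> L" for z
    using A[of z] that pmin unfolding rat_conjugate_def by blast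
  have L0: "L \<noteq> 0" and cL: "cmod L = l" using l1 by (auto simp: L_def)
  have p_not0: "poly (cp p) 0 \<noteq> 0"
  proof
    assume h: "poly (cp p) 0 = 0"
    have e: "cp [:0,1:] = [:0,1:]" by (simp add: cp_pCons)
    have "p dvd [:0,1:]"
      by (rule irr_dvd[OF pirr h]) (simp add: e)
    from cp_dvd_root[OF this pL] have "L = 0" by (simp add: e)
    with L0 show False by simp
  qed
  have inv_z0: "inverse z0 = cnj z0"
  proof -
    have "z0 * cnj z0 = complex_of_real ((cmod z0)^2)" by (rule complex_norm_square[symmetric])
    hence "z0 * cnj z0 = 1" using z0 by simp
    thus ?thesis by (metis inverse_unique)
  qed
  have real_coeffs: "\<And>k. coeff (cp p) k \<in> \<real>"
    by (simp add: coeff_map_poly of_rat_complex_real)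
  have "poly (cp p) (cnj z0) = 0"
    using real_poly_cnj_root_iff[OF real_coeffs] pz0 by simp
  moreover have "z0 \<noteq> 0" using z0 by auto
  ultimately have "poly (cp (reflect_poly p)) z0 = 0"
    using inv_z0 by (simp add: cp_reflect poly_reflect_poly_nz)
  hence p_refl: "p dvd reflect_poly p"
    by (rule irr_dvd[OF pirr pz0])
  have recip: "poly (cp p) (inverse a) = 0" if "poly (cp p) a = 0" for a
  proof -
    have a0: "a \<noteq> 0" using that p_not0 by auto
    have "poly (cp (reflect_poly p)) a = 0" by (rule cp_dvd_root[OF p_refl that])
    thus ?thesis using a0 by (simp add: cp_reflect poly_reflect_poly_nz)
  qed
  have roots3: "b = L \<or> b = inverse L \<or> cmod b = 1" if "poly (cp p) b = 0" for b
  proof (cases "b = L")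
    case False
    hence le: "cmod b \<le> 1" using conjroots that by blast
    show ?thesis
    proof (cases "cmod b = 1")
      case False
      hence lt: "cmod b < 1" using le by simp
      have b0: "b \<noteq> 0" using that p_not0 by auto
      have "cmod (inverse b) > 1" using lt b0 by (simp add: norm_inverse one_less_inverse)
      moreover have "poly (cp p) (inverse b) = 0" by (rule recip[OF that])
      ultimately have "inverse b = L" using conjroots by force
      hence "b = inverse L" by (metis inverse_inverse_eq)
      thus ?thesis by simp
    qed simp
  qed simp
  define \<mu> where "\<mu> = root n l"
  have mu_pos: "\<mu> > 0" using l1 assms(2) by (simp add: \<mu>_def)
  have mu_pow: "\<mu> ^ n = l" using l1 assms(2) by (simp add: \<mu>_def real_root_pow_pos)
  define M where "M = complex_of_real \<mu>"
  have M_pow: "M ^ n = L" by (simp add: M_def L_def mu_pow[symmetric])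
  have M0: "M \<noteq> 0" using mu_pos by (simp add: M_def)
  define P where "P = pcompose p (monom 1 n)"
  have polyP: "poly (cp P) z = poly (cp p) (z ^ n)" for z
    by (simp add: P_def cp_pcompose cp_monom poly_pcompose poly_monom)
  have P0: "P \<noteq> 0"
  proof
    assume "P = 0"
    hence "poly (cp P) 0 = 0" by simp
    moreover have "(0::complex) ^ n = 0" using assms(2) by simp
    ultimately show False using polyP[of 0] p_not0 by simp
  qed
  have PM: "poly (cp P) M = 0" using polyP[of M] M_pow pL by simp
  define S where "S = (\<lambda>r::rat poly. r \<noteq> 0 \<and> poly (cp r) M = 0)"
  have "S P" using P0 PM by (simp add: S_def)
  then obtain q0 where q0: "S q0" and q0min: "\<And>r. S r \<Longrightarrow> degree q0 \<le> degree r"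
    using ex_has_least_nat[of S P degree] by blast
  define q where "q = smult (inverse (lead_coeff q0)) q0"
  have q0nz: "q0 \<noteq> 0" and q0M: "poly (cp q0) M = 0" using q0 by (auto simp: S_def)
  have lcq: "lead_coeff q = 1" using q0nz by (simp add: q_def)
  have qnz: "q \<noteq> 0" using q0nz by (simp add: q_def)
  have qM: "poly (cp q) M = 0" using q0M by (simp add: q_def cp_smult)
  have dq: "degree q = degree q0" using q0nz by (simp add: q_def)
  have qirr: "irreducible q"
  proof (rule irreducibleI)
    show "q \<noteq> 0" by (rule qnz)
    show "\<not> q dvd 1"
    proof
      assume "q dvd 1"
      hence "degree q = 0" using qnz is_unit_iff_degree by blast
      hence "q = [:1:]" using lcq by (metis coeff_pCons_0 degree_0_id)
      thus False using qM by (simp add: cp_pCons)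
    qed
    fix a b assume ab: "q = a * b"
    have a0: "a \<noteq> 0" and b0: "b \<noteq> 0" using ab qnz by auto
    have dab: "degree q = degree a + degree b" using ab a0 b0 by (simp add: degree_mult_eq)
    have "poly (cp a) M * poly (cp b) M = 0" using qM ab by (simp add: cp_mult)
    hence "poly (cp a) M = 0 \<or> poly (cp b) M = 0" by simp
    thus "a dvd 1 \<or> b dvd 1"
    proof
      assume "poly (cp a) M = 0"
      hence "degree q0 \<le> degree a" using q0min a0 by (simp add: S_def)
      hence "degree b = 0" using dab dq by simp
      thus ?thesis using b0 is_unit_iff_degree by blast
    next
      assume "poly (cp b) M = 0"
      hence "degree q0 \<le> degree b" using q0min b0 by (simp add: S_def)
      hence "degree a = 0" using dab dq by simp
      thus ?thesis using a0 is_unit_iff_degree by blast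
    qed
  qed
  have qP: "q dvd P" by (rule irr_dvd[OF qirr qM PM])
  have dqpos: "degree q > 0"
  proof (rule ccontr)
    assume "\<not> degree q > 0"
    hence "q = [:1:]" using lcq by (metis coeff_pCons_0 degree_0_id gr0I)
    thus False using qM by (simp add: cp_pCons)
  qed
  have "\<exists>w. poly (cp q) w = 0 \<and> cmod w = 1"
  proof (rule ccontr)
    assume H: "\<not> (\<exists>w. poly (cp q) w = 0 \<and> cmod w = 1)"
    define t where "t = L + inverse L"
    have iden: "x * x + 1 - t * x = (x - L) * (x - inverse L)" for x
    proof -
      have "L * inverse L = 1" using L0 by simp
      thus ?thesis by (simp add: t_def algebra_simps)
    qed
    have wF: "w ^ (2*n) + 1 - t * w ^ n = 0" if wq: "poly (cp q) w = 0" for w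
    proof -
      have "poly (cp P) w = 0" by (rule cp_dvd_root[OF qP wq])
      hence "poly (cp p) (w ^ n) = 0" by (simp add: polyP)
      have "cmod (w ^ n) \<noteq> 1"
      proof
        assume "cmod (w ^ n) = 1"
        hence "cmod w ^ n = 1" by (simp add: norm_power)
        hence "cmod w = 1" by (rule pow_cmod_1[OF assms(2)])
        thus False using H wq by blast
      qed
      with roots3[OF \<open>poly (cp p) (w ^ n) = 0\<close>] have "w ^ n = L \<or> w ^ n = inverse L"
        by blast
      hence "(w ^ n - L) * (w ^ n - inverse L) = 0" by auto
      hence "w ^ n * w ^ n + 1 - t * w ^ n = 0" by (simp only: iden)
      moreover have "w ^ (2*n) = w ^ n * w ^ n" by (simp add: mult_2 power_add)
      ultimately show ?thesis by simp
    qed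
    define Ap :: "rat poly" where "Ap = monom 1 (2*n) + 1"
    define Bp :: "rat poly" where "Bp = monom 1 n"
    define a where "a = Ap mod q"
    define b where "b = Bp mod q"
    have eva: "poly (cp a) w = w ^ (2*n) + 1" if wq: "poly (cp q) w = 0" for w
    proof -
      have "cp Ap = cp (Ap div q) * cp q + cp a"
        by (metis a_def cp_add cp_mult div_mult_mod_eq)
      hence "poly (cp Ap) w = poly (cp a) w" using wq by simp
      moreover have "poly (cp Ap) w = w ^ (2*n) + 1"
        by (simp add: Ap_def cp_add cp_monom poly_monom)
      ultimately show ?thesis by simp
    qed
    have evb: "poly (cp b) w = w ^ n" if wq: "poly (cp q) w = 0" for w
    proof -
      have "cp Bp = cp (Bp div q) * cp q + cp b"
        by (metis b_def cp_add cp_mult div_mult_mod_eq)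
      hence "poly (cp Bp) w = poly (cp b) w" using wq by simp
      moreover have "poly (cp Bp) w = w ^ n"
        by (simp add: Bp_def cp_monom poly_monom)
      ultimately show ?thesis by simp
    qed
    define c where "c = cp a - smult t (cp b)"
    have c_roots: "poly c w = 0" if "poly (cp q) w = 0" for w
      using wF[OF that] eva[OF that] evb[OF that] by (simp add: c_def)
    have da: "degree a < degree q" using degree_mod_less[OF qnz, of Ap] dqpos by (auto simp: a_def)
    have db: "degree b < degree q" using degree_mod_less[OF qnz, of Bp] dqpos by (auto simp: b_def)
    have dc: "degree c < degree q"
    proof -
      have "degree c \<le> max (degree (cp a)) (degree (smult t (cp b)))"
        unfolding c_def by (rule degree_diff_le_max)
      also have "\<dots> \<le> max (degree a) (degree b)" by (simp add: degree_smult_le)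
      finally show ?thesis using da db by simp
    qed
    have c0: "c = 0"
    proof (rule ccontr)
      assume cnz: "c \<noteq> 0"
      have "{z. poly (cp q) z = 0} \<subseteq> {z. poly c z = 0}" using c_roots by auto
      hence "card {z. poly (cp q) z = 0} \<le> card {z. poly c z = 0}"
        by (rule card_mono[OF poly_roots_finite[OF cnz]])
      also have "\<dots> \<le> degree c" by (rule card_poly_roots_bound[OF cnz])
      finally show False using card_roots_irr[OF qirr] dc by simp
    qed
    have bnz: "b \<noteq> 0"
    proof
      assume "b = 0"
      hence "q dvd Bp" by (simp add: b_def mod_eq_0_iff_dvd)
      from cp_dvd_root[OF this qM] have "M ^ n = 0" by (simp add: Bp_def cp_monom poly_monom)
      thus False using M0 by simp
    qed
    then obtain i where bi: "coeff b i \<noteq> 0" by (metis leading_coeff_0_iff)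
    have "coeff c i = 0" using c0 by simp
    hence ti: "of_rat (coeff a i) = t * of_rat (coeff b i)"
      by (simp add: c_def coeff_map_poly)
    define s where "s = coeff a i / coeff b i"
    have "t = of_rat (coeff a i) / of_rat (coeff b i)" using ti bi by (simp add: eq_divide_eq)
    hence ts: "t = of_rat s" by (simp add: s_def of_rat_divide)
    define g :: "rat poly" where "g = [:1, -s, 1:]"
    have cg: "cp g = [:1, - of_rat s, 1:]" by (simp add: g_def cp_pCons of_rat_minus)
    have "poly (cp g) L = L * L + 1 - t * L" by (simp add: cg ts[symmetric] algebra_simps)
    also have "\<dots> = 0" by (simp only: iden) simp
    finally have "poly (cp g) L = 0" .
    hence "p dvd g" by (rule irr_dvd[OF pirr pL])
    from cp_dvd_root[OF this pz0] have "1 - t * z0 + z0 * z0 = 0"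
      by (simp add: cg ts[symmetric] algebra_simps)
    hence "z0 * z0 + 1 - t * z0 = 0" by (simp add: algebra_simps)
    hence "(z0 - L) * (z0 - inverse L) = 0" by (simp only: iden)
    hence "z0 = L \<or> z0 = inverse L" by simp
    moreover have "cmod L \<noteq> 1" "cmod (inverse L) \<noteq> 1" using cL l1 by (auto simp: norm_inverse)
    ultimately show False using z0 by auto
  qed
  then obtain w where wq: "poly (cp q) w = 0" and w1: "cmod w = 1" by blast
  have "rat_min_poly q M" using lcq qirr qM by (simp add: rat_min_poly_def)
  hence "rat_conjugate M w" using wq unfolding rat_conjugate_def by blast
  thus ?thesis using w1 by (auto simp: M_def \<mu>_def)
qed

end
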